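(* Assume $\sigma_1(x)=\sigma_1'(0)x$ with $\sigma_1'(0)\ne0$, so that $\sigma_2(x)=\tfrac12\sigma_2''(0)\,x(x-a_2)$ with $\tfrac12\sigma_2''(0)=q(1-q^{-1})\tau'(0)$ and $\sigma_2'(0)=q[\sigma_1'(0)+(1-q^{-1})\tau(0)]\ne0$. Let $\Lambda_q=\tau'(0)/\sigma_1'(0)$ and $y_0=q^{-1}\Big[1+\frac{(1-q^{-1})\tau(0)}{\sigma_1'(0)}\Big]$, and assume $\Lambda_q<0$, $a_2>0$ and $qy_0<0$. Put $a=a_2$ and $$\rho(x)=|x|^{\alpha}\sqrt{x^{\log_qx-1}}\,(qa/x;q)_\infty,\qquad q^{\alpha}=\frac{q^{-2}\tfrac12\sigma_2''(0)}{\sigma_1'(0)}.$$ Then there exist polynomials $P_n$, $n\in\mathbb{N}_0$, with $P_n$ of degree $n$ a solution of the q-EHT with $\lambda=\lambda_n$, and nonzero constants $d_n^2$, such that for all $m,n\in\mathbb{N}_0$ $$\int_a^{\infty}P_n(x)P_m(x)\rho(x)\,d_{q^{-1}}x=d_n^2\delta_{mn},$$ i.e. orthogonality with respect to $\rho$ supported on $\{q^{-k}a\}_{k\in\mathbb{N}_0}$.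
   Context: Throughout $0<q<1$. For a function $y$ and $\zeta\in\{q,q^{-1}\}$, $D_\zeta y(x)=\frac{y(x)-y(\zeta x)}{(1-\zeta)x}$ for $x\ne0$ and $D_\zeta y(0)=y'(0)$; $[n]_q=\frac{1-q^n}{1-q}$. Let $\sigma_1$ be a real polynomial of degree at most two, $\tau(x)=\tau'(0)x+\tau(0)$ a real polynomial with $\tau'(0)\ne0$, and $\sigma_2(x):=q[\sigma_1(x)+(1-q^{-1})x\tau(x)]$. The q-EHT with parameter $n$ is $\sigma_1(x)D_{q^{-1}}D_qy(x)+\tau(x)D_qy(x)+\lambda_ny(x)=0$, $\lambda_n=-[n]_q\big(\tau'(0)+\tfrac12[n-1]_{q^{-1}}\sigma_1''(0)\big)$. $(\beta;q)_\infty=\prod_{k\ge0}(1-\beta q^k)$. For $q^\alpha=c$ ($c\ne0$), $\alpha$ is any complex number with $e^{\alpha\ln q}=c$ and $|x|^\alpha:=e^{\alpha\ln|x|}$; for $x>0$, $\sqrt{x^{\log_qx-1}}:=\exp\big(\tfrac12(\log_qx-1)\ln x\big)$. For $a>0$, $\int_a^\infty f(x)\,d_{q^{-1}}x=(q^{-1}-1)a\sum_{j\ge0}q^{-j}f(q^{-j}a)$. *)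

theory Defs
  imports "HOL-Analysis.Analysis" "HOL-Computational_Algebra.Polynomial"
begin

definition qD :: "real \<Rightarrow> (real \<Rightarrow> real) \<Rightarrow> real \<Rightarrow> real" where
  "qD \<zeta> y x = (if x = 0 then deriv y 0 else (y x - y (\<zeta> * x)) / ((1 - \<zeta>) * x))"

definition qnum :: "real \<Rightarrow> int \<Rightarrow> real" where
  "qnum q n = (1 - q powi n) / (1 - q)"

definition qpoch_inf :: "real \<Rightarrow> real \<Rightarrow> real" where
  "qpoch_inf \<beta> q = (\<Prod>k. 1 - \<beta> * q ^ k)"

definition qEHT_lambda :: "real \<Rightarrow> real poly \<Rightarrow> real poly \<Rightarrow> nat \<Rightarrow> real" where
  "qEHT_lambda q \<sigma>1 \<tau> n =
     - qnum q (int n) * (coeff \<tau> 1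
        + (1/2) * qnum (1/q) (int n - 1) * poly (pderiv (pderiv \<sigma>1)) 0)"

definition solves_qEHT :: "real \<Rightarrow> real poly \<Rightarrow> real poly \<Rightarrow> nat \<Rightarrow> (real \<Rightarrow> real) \<Rightarrow> bool" where
  "solves_qEHT q \<sigma>1 \<tau> n y \<longleftrightarrow>
     (\<forall>x. poly \<sigma>1 x * qD (1/q) (qD q y) x + poly \<tau> x * qD q y x
            + qEHT_lambda q \<sigma>1 \<tau> n * y x = 0)"

end

theory Submission imports Defs begin

locale qset =
  fixes q a s1 t0 t1 :: real
  assumes q0: "0 < q" and q1: "q < 1" and apos: "0 < a" and s1nz: "s1 \<noteq> 0"
    and t1nz: "t1 \<noteq> 0" and Lam: "t1 / s1 < 0"
    and R: "q * s1 + (q - 1) * t0 = - (q - 1) * t1 * a"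
begin

definition "xx j = (1/q)^j * a"
definition "Af x = q^2 * s1 / ((1-q)^2 * x)"
definition "Cf x = (q-1) * t1 * (x - a) / ((1-q)^2 * x)"
definition "ee (k::nat) = (1 - q^k) / (1 - q)"
definition "cc (k::nat) = (q^2* s1*((1/q)^k - 1) + (q* s1 + (q-1)*t0)*(q^k - 1)) / (1-q)^2"
definition "bb n k = (\<Prod>i\<in>{k..<n}. - cc (Suc i) / (t1 * (ee i - ee n)))"
definition "PP n = (\<Sum>k\<le>n. monom (bb n k) k)"

lemma ee_inj: "ee k = ee n \<longleftrightarrow> k = n"
proof -
  have "q^k = q^n \<longleftrightarrow> k = n" using q0 q1 by (simp add: power_inject_exp')
  moreover have "ee k = ee n \<longleftrightarrow> q^k = q^n" using q1 by (auto simp: ee_def divide_simps)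
  ultimately show ?thesis by simp
qed

lemma bb_rec: assumes "k < n"
  shows "t1 * (ee k - ee n) * bb n k + cc (Suc k) * bb n (Suc k) = 0"
proof -
  have ne: "ee k \<noteq> ee n" using ee_inj assms by simp
  have "bb n k = (- cc (Suc k) / (t1 * (ee k - ee n))) * bb n (Suc k)"
    unfolding bb_def using assms by (simp add: prod.atLeast_Suc_lessThan)
  then show ?thesis using ne t1nz by (simp add: field_simps)
qed

lemma bb_nn: "bb n n = 1" by (simp add: bb_def)

lemma coeff_PP: "coeff (PP n) i = (if i \<le> n then bb n i else 0)"
  unfolding PP_def by (simp add: coeff_sum coeff_monom)

lemma degree_PP: "degree (PP n) = n"
proof (rule antisym)
  show "degree (PP n) \<le> n" by (rule degree_le) (simp add: coeff_PP)
  show "n \<le> degree (PP n)" by (rule le_degree) (simp add: coeff_PP bb_nn)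
qed

lemma poly_PP: "poly (PP n) x = (\<Sum>k\<le>n. bb n k * x^k)"
  unfolding PP_def by (simp add: poly_sum poly_monom)

lemma cc0: "cc 0 = 0" by (simp add: cc_def)
lemma cc1: "cc (Suc 0) = t0"
proof -
  have "q^2 * s1 * ((1/q)^1 - 1) + (q * s1 + (q-1) * t0) * (q^1 - 1) = (1-q)^2 * t0"
    using q0 by (simp add: field_simps power2_eq_square)
  then show ?thesis using q1 by (simp add: cc_def)
qed

lemma mono_id: assumes "x \<noteq> 0"
  shows "x * (Af x * (((1/q)*x)^k - x^k) + Cf x * ((q*x)^k - x^k)) = t1 * ee k * x^(k+1) + cc k * x^k"
proof -
  have qq: "(1-q) \<noteq> 0" using q1 by simp
  have "x * (Af x * (((1/q)*x)^k - x^k) + Cf x * ((q*x)^k - x^k))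
     = (q^2* s1*((1/q)^k - 1) + (q-1)*t1*(x-a)*(q^k - 1)) * x^k / (1-q)^2"
    using assms qq unfolding Af_def Cf_def by (simp add: power_mult_distrib field_simps)
  also have "\<dots> = t1 * ee k * x^(k+1) + cc k * x^k"
  proof -
    have gen: "(q^2 * s1 * (Zi - 1) + (q-1) * t1 * (x-a) * (Z - 1)) * X / (1-q)^2
       = t1 * ((1-Z)/(1-q)) * (x * X) + ((q^2 * s1 * (Zi - 1) + (q * s1 + (q-1) * t0) * (Z - 1)) / (1-q)^2) * X"
      for Z Zi X :: real
    proof -
      have "(q^2 * s1 * (Zi - 1) + (q-1) * t1 * (x-a) * (Z - 1)) * X
         = (t1 * (1-Z) * (1-q) * (x * X) + (q^2 * s1 * (Zi - 1) + (q * s1 + (q-1) * t0) * (Z - 1)) * X)"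
        using R by algebra
      moreover have "t1 * ((1-Z)/(1-q)) * (x * X) = t1 * (1-Z) * (1-q) * (x * X) / (1-q)^2"
        using qq by (simp add: power2_eq_square)
      ultimately show ?thesis
        by (metis (no_types, lifting) add_divide_distrib times_divide_eq_left)
    qed
    show ?thesis unfolding ee_def cc_def using gen[of Zi "q^k" "x^k" for Zi] by simp
  qed
  finally show ?thesis .
qed

lemma sum_zero: "(\<Sum>k\<le>n. bb n k * (t1 * (ee k - ee n) * x^(k+1) + cc k * x^k)) = 0"
proof (cases n)
  case 0 then show ?thesis by (simp add: cc0)
next
  case (Suc m)
  have "(\<Sum>k\<le>n. bb n k * (t1 * (ee k - ee n) * x^(k+1) + cc k * x^k))
     = (\<Sum>k\<le>n. bb n k * (t1 * (ee k - ee n)) * x^(k+1)) + (\<Sum>k\<le>n. bb n k * cc k * x^k)"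
    by (subst sum.distrib[symmetric], rule sum.cong, auto simp: algebra_simps)
  also have "(\<Sum>k\<le>n. bb n k * (t1 * (ee k - ee n)) * x^(k+1))
      = (\<Sum>k\<le>m. bb n k * (t1 * (ee k - ee n)) * x^(k+1))"
    using Suc by simp
  also have "\<dots> = (\<Sum>k\<le>m. - (bb n (Suc k) * cc (Suc k) * x^(Suc k)))"
  proof (rule sum.cong)
    fix k assume "k \<in> {..m}"
    then have "k < n" using Suc by simp
    from bb_rec[OF this] have "bb n k * (t1 * (ee k - ee n)) = - (bb n (Suc k) * cc (Suc k))"
      by algebra
    then show "bb n k * (t1 * (ee k - ee n)) * x^(k+1) = - (bb n (Suc k) * cc (Suc k) * x^(Suc k))"
      by simp
  qed simp
  also have "(\<Sum>k\<le>n. bb n k * cc k * x^k) = (\<Sum>k\<le>m. bb n (Suc k) * cc (Suc k) * x^(Suc k))"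
    unfolding Suc sum.atMost_Suc_shift by (simp add: cc0 del: sum.atMost_Suc)
  finally show ?thesis by (simp add: sum_negf)
qed

lemma PP_eig: assumes "x \<noteq> 0"
  shows "Af x * (poly (PP n) ((1/q)*x) - poly (PP n) x) + Cf x * (poly (PP n) (q*x) - poly (PP n) x)
          - ee n * t1 * poly (PP n) x = 0"
proof -
  have h1: "poly (PP n) y - poly (PP n) z = (\<Sum>k\<le>n. bb n k * (y^k - z^k))" for y z
    by (simp add: poly_PP sum_subtractf[symmetric] right_diff_distrib)
  have h2: "x * (ee n * t1 * poly (PP n) x) = (\<Sum>k\<le>n. bb n k * (ee n * t1 * x^(k+1)))"
    by (simp add: poly_PP sum_distrib_left mult_ac)
  have "x * (Af x * (poly (PP n) ((1/q)*x) - poly (PP n) x) + Cf x * (poly (PP n) (q*x) - poly (PP n) x)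
          - ee n * t1 * poly (PP n) x)
     = x * Af x * (poly (PP n) ((1/q)*x) - poly (PP n) x) + x * Cf x * (poly (PP n) (q*x) - poly (PP n) x)
          - x * (ee n * t1 * poly (PP n) x)"
    by (simp add: right_diff_distrib distrib_left mult_ac)
  also have "\<dots> = (\<Sum>k\<le>n. x * Af x * (bb n k * (((1/q)*x)^k - x^k))) + (\<Sum>k\<le>n. x * Cf x * (bb n k * ((q*x)^k - x^k)))
          - (\<Sum>k\<le>n. bb n k * (ee n * t1 * x^(k+1)))"
    unfolding h1 h2 sum_distrib_left ..
  also have "\<dots> = (\<Sum>k\<le>n. bb n k * (x * (Af x * (((1/q)*x)^k - x^k) + Cf x * ((q*x)^k - x^k)) - ee n * t1 * x^(k+1)))"
    unfolding sum.distrib[symmetric] sum_subtractf[symmetric]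
    by (rule sum.cong) (simp_all add: ring_distribs mult_ac)
  also have "\<dots> = (\<Sum>k\<le>n. bb n k * (t1 * (ee k - ee n) * x^(k+1) + cc k * x^k))"
    using mono_id[OF assms] by (simp add: algebra_simps)
  also have "\<dots> = 0" by (rule sum_zero)
  finally show ?thesis using assms by simp
qed

lemma gen_L: assumes "x \<noteq> 0"
  shows "s1 * x * qD (1/q) (qD q y) x + (t0 + t1 * x) * qD q y x
       = Af x * (y ((1/q)*x) - y x) + Cf x * (y (q*x) - y x)"
proof -
  have qq: "1 - q \<noteq> 0" "q \<noteq> 0" "1 - 1/q \<noteq> 0" using q0 q1 by auto
  have gen: "s1 * x * (((Y0 - Ym) / ((1-q)*x) - (Yp - Y0) / ((1-q)*((1/q)*x))) / ((1 - 1/q)*x))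
      + (t0 + t1 * x) * ((Y0 - Ym) / ((1-q)*x))
      = Af x * (Yp - Y0) + Cf x * (Ym - Y0)" for Y0 Ym Yp
  proof -
    have e1: "(1 - 1/q) = (q - 1)/q" using qq by (simp add: field_simps)
    have qx: "q - 1 \<noteq> 0" using qq by simp
    show ?thesis using qq qx assms unfolding Af_def Cf_def e1
      apply (simp add: divide_simps power2_eq_square)
      using R by algebra
  qed
  have "q * ((1/q) * x) = x" using qq by simp
  then show ?thesis using gen[of "y x" "y (q*x)" "y ((1/q)*x)"] assms qq
    unfolding qD_def by simp
qed

lemma lam_eq: "qEHT_lambda q [:0, s1:] [:t0, t1:] n = - ee n * t1"
  by (simp add: qEHT_lambda_def qnum_def ee_def pderiv_pCons)

lemma PP_solves: "solves_qEHT q [:0, s1:] [:t0, t1:] n (poly (PP n))"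
  unfolding solves_qEHT_def lam_eq
proof
  fix x :: real
  show "poly [:0, s1:] x * qD (1 / q) (qD q (poly (PP n))) x + poly [:t0, t1:] x * qD q (poly (PP n)) x +
         - ee n * t1 * poly (PP n) x = 0"
  proof (cases "x = 0")
    case False
    have "poly [:0, s1:] x * qD (1 / q) (qD q (poly (PP n))) x + poly [:t0, t1:] x * qD q (poly (PP n)) x
        = s1 * x * qD (1/q) (qD q (poly (PP n))) x + (t0 + t1 * x) * qD q (poly (PP n)) x"
      by (simp add: algebra_simps)
    also have "\<dots> = Af x * (poly (PP n) ((1/q)*x) - poly (PP n) x) + Cf x * (poly (PP n) (q*x) - poly (PP n) x)"
      by (rule gen_L[OF False])
    finally show ?thesis using PP_eig[OF False, of n] by simp
  next
    case True
    have d: "deriv (poly (PP n)) 0 = coeff (PP n) 1"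
      by (simp add: DERIV_imp_deriv[OF poly_DERIV] poly_0_coeff_0 coeff_pderiv)
    have "t0 * coeff (PP n) 1 - ee n * t1 * coeff (PP n) 0 = 0"
    proof (cases n)
      case 0 then show ?thesis by (simp add: coeff_PP ee_def)
    next
      case (Suc m)
      have "0 < n" using Suc by simp
      from bb_rec[OF this] show ?thesis using Suc by (simp add: coeff_PP cc1 ee_def algebra_simps)
    qed
    then show ?thesis using True by (simp add: qD_def d poly_0_coeff_0)
  qed
qed


definition "cst = q powi (-2) * (q * (1 - 1/q) * t1) / s1"
definition "EE j = exp ((1/2) * (log q (xx j) - 1) * ln (xx j))"
definition "WW j = (1/q - 1) * a * (1/q)^j * (1/cst)^j * EE j * qpoch_inf (q * a / xx j) q"
definition "kap = q * s1 / ((q - 1) * t1)"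

lemma cst_alt: "cst = (q - 1) * t1 / (q^2 * s1)"
  using q0 s1nz by (simp add: cst_def power_int_minus field_simps power2_eq_square)

lemma kap_pos: "kap > 0"
proof -
  have "t1 / s1 < 0" by (rule Lam)
  hence "t1 * s1 < 0" by (simp add: divide_less_0_iff mult_less_0_iff)
  hence "(q - 1) * t1 * s1 > 0" using q1 by (simp add: mult_neg_neg mult.assoc)
  hence "q * s1 * ((q - 1) * t1) > 0" using q0 by (simp add: mult_ac)
  thus ?thesis unfolding kap_def by (simp add: zero_less_divide_iff zero_less_mult_iff)
qed

lemma cst_kap: "1 / cst = q * kap"
  using q0 q1 s1nz t1nz by (simp add: cst_alt kap_def field_simps power2_eq_square)

lemma cst_pos: "cst > 0"
proof -
  have "1 / cst > 0" using cst_kap kap_pos q0 by simp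
  thus ?thesis by simp
qed

lemma xx_pos: "xx j > 0" using q0 apos by (simp add: xx_def)
lemma xx_Suc: "xx (Suc j) = xx j / q" by (simp add: xx_def)
lemma q_xx_Suc: "q * xx (Suc j) = xx j" using q0 by (simp add: xx_def)
lemma xx_ge: "xx j \<ge> a"
proof -
  have "(1/q)^j \<ge> 1" using q0 q1 by (simp add: one_le_power)
  thus ?thesis using apos by (simp add: xx_def)
qed
lemma xx_Suc_gt: "xx (Suc j) > a"
proof -
  have "xx j / q > xx j" using q0 q1 xx_pos[of j] by (simp add: field_simps)
  thus ?thesis using xx_ge[of j] xx_Suc[of j] by simp
qed
lemma qa_xx: "q * a / xx j = q ^ Suc j"
  using q0 apos by (simp add: xx_def power_one_over field_simps)

lemma qpoch_conv: "\<bar>\<beta>\<bar> \<le> 1 \<Longrightarrow> convergent_prod (\<lambda>k. 1 - \<beta> * q ^ k)"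
proof -
  have "summable (\<lambda>k. norm ((1 - \<beta> * q ^ k) - 1))"
    using q0 q1 by (simp add: abs_mult summable_mult)
  thus "convergent_prod (\<lambda>k. 1 - \<beta> * q ^ k)"
    by (intro abs_convergent_prod_imp_convergent_prod summable_imp_abs_convergent_prod)
qed

lemma qpoch_pos: assumes "0 \<le> \<beta>" "\<beta> < 1" shows "qpoch_inf \<beta> q > 0"
  unfolding qpoch_inf_def
proof (rule less_0_prodinf)
  show "convergent_prod (\<lambda>k. 1 - \<beta> * q ^ k)" using assms by (intro qpoch_conv) simp
  fix i
  have "\<beta> * q ^ i \<le> \<beta> * 1" using assms q0 q1 by (intro mult_left_mono power_le_one) auto
  thus "0 < 1 - \<beta> * q ^ i" using assms by simp
qed

lemma qpoch_split: assumes "0 \<le> \<beta>" "\<beta> < 1"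
  shows "qpoch_inf \<beta> q = (1 - \<beta>) * qpoch_inf (\<beta> * q) q"
proof -
  have "(\<Prod>n. 1 - \<beta> * q ^ Suc n) = (\<Prod>n. 1 - \<beta> * q ^ n) / (1 - \<beta> * q ^ 0)"
    by (rule prodinf_split_head[where f = "\<lambda>k. 1 - \<beta> * q ^ k"]) (use assms in \<open>auto intro: qpoch_conv\<close>)
  moreover have "(\<lambda>n. 1 - \<beta> * q ^ Suc n) = (\<lambda>n. 1 - \<beta> * q * q ^ n)" by (simp add: mult_ac)
  ultimately show ?thesis using assms unfolding qpoch_inf_def by simp
qed

lemma EE_Suc: "EE (Suc j) = EE j * q / xx j"
proof -
  define u where "u = ln (xx j)"
  define l where "l = ln q"
  have l0: "l \<noteq> 0" using q0 q1 by (simp add: l_def)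
  have lnS: "ln (xx (Suc j)) = u - l"
    using q0 xx_pos[of j] by (simp add: xx_Suc u_def l_def ln_div)
  have "(1/2) * (log q (xx (Suc j)) - 1) * ln (xx (Suc j))
      = (1/2) * (log q (xx j) - 1) * ln (xx j) + (l - u)"
    unfolding log_def lnS using l0 by (simp add: u_def[symmetric] l_def[symmetric] field_simps power2_eq_square)
  hence "EE (Suc j) = exp ((1/2) * (log q (xx j) - 1) * ln (xx j) + (l - u))"
    unfolding EE_def by (simp only:)
  hence "EE (Suc j) = EE j * exp (l - u)" by (simp add: EE_def exp_add)
  also have "exp (l - u) = q / xx j" using q0 xx_pos[of j] by (simp add: l_def u_def exp_diff)
  finally show ?thesis by simp
qed

lemma EE_pos: "EE j > 0" by (simp add: EE_def)

lemma WW_pos: "WW j > 0"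
proof -
  have "qpoch_inf (q * a / xx j) q > 0" unfolding qa_xx using q0 q1
    by (intro qpoch_pos) (auto simp del: power_Suc intro: power_Suc_less_one)
  thus ?thesis using q0 q1 apos cst_pos EE_pos[of j] by (simp add: WW_def)
qed

lemma WW_Suc: "WW (Suc j) * (xx (Suc j) - a) = WW j * kap"
proof -
  define Q where "Q = qpoch_inf (q ^ Suc (Suc j)) q"
  have qs: "qpoch_inf (q ^ Suc j) q = (1 - q ^ Suc j) * Q"
    unfolding Q_def using qpoch_split[of "q ^ Suc j"] q0 q1 power_Suc_less_one[OF q0 q1, of j]
    by (simp add: mult_ac del: power_Suc) (metis power_Suc)
  have x1: "xx (Suc j) - a = (xx j - q * a) / q" using q0 by (simp add: xx_Suc field_simps)
  have x2: "(1 - q ^ Suc j) = (xx j - q * a) / xx j" 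
    using qa_xx[of j] xx_pos[of j] by (simp add: field_simps)
  have g: "(1/q) * (q * kap) * (F * q / X) * ((X - q * a) / q) = F * ((X - q * a) / X) * kap"
    if "X > 0" for F X using that q0 by (simp add: field_simps)
  have p1: "(1/q)^Suc j = (1/q) * (1/q)^j" by simp
  have p2: "(1/cst)^Suc j = (q * kap) * (1/cst)^j" using cst_kap by simp
  show ?thesis
    unfolding WW_def qa_xx EE_Suc qs Q_def[symmetric] x1 x2 p1 p2
    using g[OF xx_pos[of j], of "(1/q - 1) * a * (1/q)^j * (1/cst)^j * EE j * Q"] q0
    by (simp add: mult_ac)
qed

lemma pearson: "WW (Suc j) * Cf (xx (Suc j)) = WW j * Af (xx j)"
proof -
  have "WW (Suc j) * Cf (xx (Suc j)) = (WW (Suc j) * (xx (Suc j) - a)) * ((q-1) * t1 / ((1-q)^2 * xx (Suc j)))"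
    by (simp add: Cf_def)
  also have "\<dots> = WW j * kap * ((q-1) * t1 / ((1-q)^2 * xx (Suc j)))" by (simp add: WW_Suc)
  also have "\<dots> = WW j * Af (xx j)"
  proof -
    have k: "kap * ((q-1) * t1) = q * s1" using q1 t1nz by (simp add: kap_def)
    have "kap * ((q-1) * t1 / ((1-q)^2 * (X / q))) = q^2 * s1 / ((1-q)^2 * X)" if "X > 0" for X
    proof -
      have "kap * ((q-1) * t1 / ((1-q)^2 * (X / q))) = (kap * ((q-1) * t1)) * q / ((1-q)^2 * X)"
        using q0 by (simp add: field_simps)
      also have "\<dots> = q^2 * s1 / ((1-q)^2 * X)" unfolding k by (simp add: power2_eq_square)
      finally show ?thesis .
    qed
    note eq = this[OF xx_pos[of j]]
    show ?thesis unfolding Af_def xx_Suc mult.assoc eq ..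
  qed
  finally show ?thesis .
qed


lemma p_gt1: "1 / q > 1" using q0 q1 by simp

lemma Wsum: "summable (\<lambda>j. WW j * (1/q)^(N*j))"
proof -
  define p where "p = 1/q"
  have p1: "p > 1" using p_gt1 by (simp add: p_def)
  obtain J where J: "(2 * kap * p^N + a) / a < p ^ J" using real_arch_pow[OF p1] by blast
  have J2: "2 * kap * p^N + a < p^J * a" using J apos by (simp add: field_simps)
  show ?thesis
  proof (rule summable_ratio_test[where c = "1/2" and N = J])
    fix j assume jJ: "J \<le> j"
    have "p^J \<le> p^Suc j" using p1 jJ by (intro power_increasing) auto
    hence "p^J * a \<le> p^Suc j * a" using apos by (intro mult_right_mono) auto
    hence "p^J * a \<le> xx (Suc j)" by (simp add: xx_def p_def)
    hence big: "2 * kap * p^N < xx (Suc j) - a" using J2 by simp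
    have d: "xx (Suc j) - a > 0" using xx_Suc_gt[of j] by simp
    have W: "WW (Suc j) = WW j * kap / (xx (Suc j) - a)"
      using WW_Suc[of j] d by (simp add: field_simps)
    have "WW (Suc j) * p^(N * Suc j) = (WW j * p^(N*j)) * (kap * p^N / (xx (Suc j) - a))"
      unfolding W by (simp add: power_add mult_ac)
    also have "\<dots> \<le> (WW j * p^(N*j)) * (1/2)"
    proof (rule mult_left_mono)
      show "kap * p^N / (xx (Suc j) - a) \<le> 1/2" using big d by (simp add: field_simps)
      show "0 \<le> WW j * p^(N*j)" using WW_pos[of j] p1 by simp
    qed
    finally have "WW (Suc j) * p^(N * Suc j) \<le> 1/2 * (WW j * p^(N*j))" by simp
    moreover have "0 \<le> WW (Suc j) * p^(N * Suc j)" "0 \<le> WW j * p^(N*j)"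
      using WW_pos[of "Suc j"] WW_pos[of j] p1 by (auto intro!: mult_nonneg_nonneg)
    ultimately show "norm (WW (Suc j) * (1/q)^(N * Suc j)) \<le> 1/2 * norm (WW j * (1/q)^(N*j))"
      by (simp add: p_def)
  qed simp
qed

lemma pbound: "\<exists>M\<ge>0. \<forall>j. \<bar>poly P (xx j)\<bar> \<le> M * (1/q)^(degree P * j)"
proof -
  define d where "d = degree P"
  define M1 where "M1 = max 1 a"
  define M where "M = (\<Sum>i\<le>d. \<bar>coeff P i\<bar>) * M1 ^ d"
  have M0: "M \<ge> 0" unfolding M_def M1_def by (intro mult_nonneg_nonneg sum_nonneg) auto
  have "\<bar>poly P (xx j)\<bar> \<le> M * (1/q)^(d * j)" for j
  proof -
    have "\<bar>poly P (xx j)\<bar> = \<bar>\<Sum>i\<le>d. coeff P i * xx j ^ i\<bar>" by (simp add: poly_altdef d_def)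
    also have "\<dots> \<le> (\<Sum>i\<le>d. \<bar>coeff P i * xx j ^ i\<bar>)" by (rule sum_abs)
    also have "\<dots> \<le> (\<Sum>i\<le>d. \<bar>coeff P i\<bar> * (M1 ^ d * (1/q)^(d*j)))"
    proof (rule sum_mono)
      fix i assume i: "i \<in> {..d}"
      have "xx j ^ i = (1/q)^(j*i) * a^i" by (simp add: xx_def power_mult_distrib power_mult)
      also have "\<dots> \<le> (1/q)^(d*j) * M1^d"
      proof (rule mult_mono)
        show "(1/q)^(j*i) \<le> (1/q)^(d*j)" using p_gt1 i by (intro power_increasing) auto
        have "a^i \<le> M1^i" using apos by (intro power_mono) (auto simp: M1_def)
        also have "\<dots> \<le> M1^d" using i by (intro power_increasing) (auto simp: M1_def)
        finally show "a^i \<le> M1^d" .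
      qed (use p_gt1 apos q0 in auto)
      finally have "xx j ^ i \<le> M1 ^ d * (1/q)^(d*j)" by (simp add: mult_ac)
      moreover have "xx j ^ i \<ge> 0" using xx_pos[of j] by simp
      ultimately show "\<bar>coeff P i * xx j ^ i\<bar> \<le> \<bar>coeff P i\<bar> * (M1 ^ d * (1/q)^(d*j))"
        by (simp add: abs_mult mult_left_mono)
    qed
    also have "\<dots> = M * (1/q)^(d*j)" unfolding M_def sum_distrib_right by (simp add: mult_ac)
    finally show ?thesis .
  qed
  thus ?thesis using M0 unfolding d_def by blast
qed

lemma Wsum_h: assumes "\<And>j. \<bar>h j\<bar> \<le> M * (1/q)^(N*j)"
  shows "summable (\<lambda>j. WW j * h j)"
proof (rule summable_comparison_test')
  show "summable (\<lambda>j. M * (WW j * (1/q)^(N*j)))" by (intro summable_mult Wsum)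
  fix j
  have "WW j * \<bar>h j\<bar> \<le> WW j * (M * (1/q)^(N*j))"
    using WW_pos[of j] assms[of j] by (intro mult_left_mono) auto
  thus "norm (WW j * h j) \<le> M * (WW j * (1/q)^(N*j))"
    using WW_pos[of j] by (simp add: abs_mult mult_ac)
qed


lemma Af_bound: "\<bar>Af (xx j)\<bar> \<le> \<bar>q^2 * s1\<bar> / ((1-q)^2 * a)"
proof -
  have "\<bar>Af (xx j)\<bar> = \<bar>q^2 * s1\<bar> / ((1-q)^2 * xx j)"
    using xx_pos[of j] q1 by (simp add: Af_def abs_mult)
  also have "\<dots> \<le> \<bar>q^2 * s1\<bar> / ((1-q)^2 * a)"
    using xx_ge[of j] apos q1 by (intro divide_left_mono mult_left_mono) auto
  finally show ?thesis .
qed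

lemma pair_bound:
  "\<exists>B. \<forall>j. \<bar>Af (xx j) * (poly f (xx (Suc j)) * poly g (xx j) - poly f (xx j) * poly g (xx (Suc j)))\<bar>
        \<le> B * (1/q)^((degree f + degree g) * j)"
proof -
  obtain Mf where Mf: "Mf \<ge> 0" "\<And>j. \<bar>poly f (xx j)\<bar> \<le> Mf * (1/q)^(degree f * j)" using pbound by blast
  obtain Mg where Mg: "Mg \<ge> 0" "\<And>j. \<bar>poly g (xx j)\<bar> \<le> Mg * (1/q)^(degree g * j)" using pbound by blast
  define p where "p = 1/q"
  have p1: "p > 1" using p_gt1 p_def by simp
  define df where "df = degree f"
  define dg where "dg = degree g"
  define KA where "KA = \<bar>q^2 * s1\<bar> / ((1-q)^2 * a)"
  define B where "B = KA * (2 * Mf * Mg * p^df * p^dg)"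
  have "\<bar>Af (xx j) * (poly f (xx (Suc j)) * poly g (xx j) - poly f (xx j) * poly g (xx (Suc j)))\<bar>
        \<le> B * p^((df + dg) * j)" for j
  proof -
    have f1: "\<bar>poly f (xx (Suc j))\<bar> \<le> (Mf * p^df) * p^(df*j)"
      using Mf(2)[of "Suc j"] by (simp add: p_def df_def power_add mult_ac)
    have g1: "\<bar>poly g (xx (Suc j))\<bar> \<le> (Mg * p^dg) * p^(dg*j)"
      using Mg(2)[of "Suc j"] by (simp add: p_def dg_def power_add mult_ac)
    have f0: "\<bar>poly f (xx j)\<bar> \<le> (Mf * p^df) * p^(df*j)"
    proof -
      have "Mf * p^(df*j) \<le> (Mf * p^df) * p^(df*j)"
        using Mf(1) p1 by (intro mult_right_mono) (auto simp: mult_le_cancel_left1 one_le_power)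
      thus ?thesis using Mf(2)[of j] by (simp add: p_def df_def)
    qed
    have g0: "\<bar>poly g (xx j)\<bar> \<le> (Mg * p^dg) * p^(dg*j)"
    proof -
      have "Mg * p^(dg*j) \<le> (Mg * p^dg) * p^(dg*j)"
        using Mg(1) p1 by (intro mult_right_mono) (auto simp: mult_le_cancel_left1 one_le_power)
      thus ?thesis using Mg(2)[of j] by (simp add: p_def dg_def)
    qed
    define U where "U = (Mf * p^df) * p^(df*j)"
    define V where "V = (Mg * p^dg) * p^(dg*j)"
    have U0: "U \<ge> 0" "V \<ge> 0" using Mf(1) Mg(1) p1 by (auto simp: U_def V_def)
    have "\<bar>poly f (xx (Suc j)) * poly g (xx j) - poly f (xx j) * poly g (xx (Suc j))\<bar>
        \<le> \<bar>poly f (xx (Suc j))\<bar> * \<bar>poly g (xx j)\<bar> + \<bar>poly f (xx j)\<bar> * \<bar>poly g (xx (Suc j))\<bar>"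
      by (metis abs_mult abs_triangle_ineq4)
    also have "\<dots> \<le> U * V + U * V"
      using f1 g1 f0 g0 U0 unfolding U_def[symmetric] V_def[symmetric]
      by (intro add_mono mult_mono) auto
    also have "\<dots> = (2 * Mf * Mg * p^df * p^dg) * p^((df + dg) * j)"
    proof -
      have "p^((df + dg) * j) = p^(df*j) * p^(dg*j)" by (simp add: add_mult_distrib power_add)
      thus ?thesis by (simp add: U_def V_def mult_ac)
    qed
    finally have h: "\<bar>poly f (xx (Suc j)) * poly g (xx j) - poly f (xx j) * poly g (xx (Suc j))\<bar>
        \<le> (2 * Mf * Mg * p^df * p^dg) * p^((df + dg) * j)" .
    have "\<bar>Af (xx j) * (poly f (xx (Suc j)) * poly g (xx j) - poly f (xx j) * poly g (xx (Suc j)))\<bar>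
        \<le> KA * ((2 * Mf * Mg * p^df * p^dg) * p^((df + dg) * j))"
      unfolding abs_mult using Af_bound[of j] h unfolding KA_def[symmetric]
      by (intro mult_mono) auto
    thus ?thesis by (simp add: B_def mult_ac)
  qed
  thus ?thesis unfolding p_def df_def dg_def by blast
qed

lemma ortho:
  fixes f g :: "real poly" and lf lg :: real
  assumes Ef: "\<And>j. Af (xx j) * (poly f (xx (Suc j)) - poly f (xx j)) + Cf (xx j) * (poly f (q * xx j) - poly f (xx j)) + lf * poly f (xx j) = 0"
    and Eg: "\<And>j. Af (xx j) * (poly g (xx (Suc j)) - poly g (xx j)) + Cf (xx j) * (poly g (q * xx j) - poly g (xx j)) + lg * poly g (xx j) = 0"
    and ne: "lf \<noteq> lg"
  shows "(\<lambda>j. WW j * (poly f (xx j) * poly g (xx j))) sums 0"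
proof -
  define F where "F j = WW j * (Af (xx j) * (poly f (xx (Suc j)) * poly g (xx j) - poly f (xx j) * poly g (xx (Suc j))))" for j
  define G where "G j = (case j of 0 \<Rightarrow> 0 | Suc i \<Rightarrow> F i)" for j
  have key: "(lg - lf) * (W * (f0 * g0)) = W * A * (f1 * g0 - f0 * g1) + W * C * (fm * g0 - f0 * gm)"
    if "A * (f1 - f0) + C * (fm - f0) + lf * f0 = 0" "A * (g1 - g0) + C * (gm - g0) + lg * g0 = 0"
    for W A C f0 f1 fm g0 g1 gm :: real
    using that by algebra
  have C0: "Cf (xx 0) = 0" by (simp add: Cf_def xx_def)
  have tel: "(lg - lf) * (WW j * (poly f (xx j) * poly g (xx j))) = G (Suc j) - G j" for j
  proof (cases j)
    case 0
    show ?thesis using key[OF Ef[of 0] Eg[of 0], of "WW 0"] 0 C0 by (simp add: G_def F_def mult_ac)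
  next
    case (Suc i)
    have pe: "WW j * Cf (xx j) = WW i * Af (xx i)" using pearson[of i] Suc by simp
    have qx: "q * xx j = xx i" using q_xx_Suc[of i] Suc by simp
    have "(lg - lf) * (WW j * (poly f (xx j) * poly g (xx j)))
       = WW j * Af (xx j) * (poly f (xx (Suc j)) * poly g (xx j) - poly f (xx j) * poly g (xx (Suc j)))
         + WW j * Cf (xx j) * (poly f (xx i) * poly g (xx j) - poly f (xx j) * poly g (xx i))"
      using key[OF Ef[of j] Eg[of j], of "WW j"] qx by simp
    also have "\<dots> = F j - F i" unfolding pe F_def using Suc by (simp add: algebra_simps)
    finally show ?thesis using Suc by (simp add: G_def)
  qed
  obtain B where B: "\<And>j. \<bar>Af (xx j) * (poly f (xx (Suc j)) * poly g (xx j) - poly f (xx j) * poly g (xx (Suc j)))\<bar>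
        \<le> B * (1/q)^((degree f + degree g) * j)" using pair_bound by blast
  have "summable F" unfolding F_def by (rule Wsum_h[OF B])
  hence "F \<longlonglongrightarrow> 0" by (rule summable_LIMSEQ_zero)
  hence "(\<lambda>j. G (Suc j)) \<longlonglongrightarrow> 0" by (simp add: G_def)
  hence "G \<longlonglongrightarrow> 0" by (rule LIMSEQ_imp_Suc)
  hence "(\<lambda>j. G (Suc j) - G j) sums (0 - G 0)" by (rule telescope_sums)
  hence "(\<lambda>j. (lg - lf) * (WW j * (poly f (xx j) * poly g (xx j)))) sums 0"
    unfolding tel by (simp add: G_def)
  hence "(\<lambda>j. (1 / (lg - lf)) * ((lg - lf) * (WW j * (poly f (xx j) * poly g (xx j))))) sums ((1 / (lg - lf)) * 0)"
    by (rule sums_mult)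
  thus ?thesis using ne by simp
qed

lemma pos_norm: assumes "f \<noteq> 0"
  shows "(\<lambda>j. WW j * (poly f (xx j) * poly f (xx j))) sums (suminf (\<lambda>j. WW j * (poly f (xx j) * poly f (xx j))))"
    and "suminf (\<lambda>j. WW j * (poly f (xx j) * poly f (xx j))) > 0"
proof -
  obtain M where M: "M \<ge> 0" "\<And>j. \<bar>poly f (xx j)\<bar> \<le> M * (1/q)^(degree f * j)" using pbound by blast
  have bd: "\<bar>poly f (xx j) * poly f (xx j)\<bar> \<le> (M * M) * (1/q)^((degree f + degree f) * j)" for j
  proof -
    have "\<bar>poly f (xx j) * poly f (xx j)\<bar> \<le> (M * (1/q)^(degree f * j)) * (M * (1/q)^(degree f * j))"
      unfolding abs_mult using M(2)[of j] by (intro mult_mono) auto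
    moreover have "(1/q)^((degree f + degree f) * j) = (1/q)^(degree f * j) * (1/q)^(degree f * j)"
      by (simp add: add_mult_distrib power_add)
    ultimately show ?thesis by (simp add: mult_ac)
  qed
  have sm: "summable (\<lambda>j. WW j * (poly f (xx j) * poly f (xx j)))" by (rule Wsum_h[OF bd])
  thus "(\<lambda>j. WW j * (poly f (xx j) * poly f (xx j))) sums (suminf (\<lambda>j. WW j * (poly f (xx j) * poly f (xx j))))"
    by (rule summable_sums)
  have "\<exists>j. poly f (xx j) \<noteq> 0"
  proof (rule ccontr)
    assume "\<not> ?thesis"
    hence "range xx \<subseteq> {x. poly f x = 0}" by auto
    moreover have "finite {x. poly f x = 0}" using assms by (rule poly_roots_finite)
    ultimately have "finite (range xx)" by (rule finite_subset)
    moreover have "inj xx"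
    proof (rule injI)
      fix i j assume "xx i = xx j"
      hence "(1/q)^i = (1/q)^j" using apos by (simp add: xx_def)
      thus "i = j" using p_gt1 by (simp add: power_inject_exp)
    qed
    ultimately show False by (simp add: finite_image_iff)
  qed
  then obtain i where i: "poly f (xx i) \<noteq> 0" by blast
  show "suminf (\<lambda>j. WW j * (poly f (xx j) * poly f (xx j))) > 0"
  proof (rule suminf_pos2[OF sm])
    show "0 \<le> WW j * (poly f (xx j) * poly f (xx j))" for j using WW_pos[of j] by simp
    show "0 < WW i * (poly f (xx i) * poly f (xx i))" using WW_pos[of i] i by (simp add: zero_less_mult_iff) linarith
  qed
qed

end

theorem theorem5p15:
  fixes q :: real and \<sigma>1 \<tau> :: "real poly" and s1 a :: real and \<alpha> :: complex
  assumes q: "0 < q" "q < 1"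
    and sigma1: "\<sigma>1 = [:0, s1:]" "s1 \<noteq> 0"
    and tau: "degree \<tau> \<le> 1" "coeff \<tau> 1 \<noteq> 0"
    and sigma2_fact: "smult q (\<sigma>1 + smult (1 - 1/q) ([:0, 1:] * \<tau>))
                 = smult (q * (1 - 1/q) * coeff \<tau> 1) ([:0, 1:] * [:- a, 1:])"
    and sigma2': "q * (s1 + (1 - 1/q) * coeff \<tau> 0) \<noteq> 0"
    and Lambda: "coeff \<tau> 1 / s1 < 0"
    and a_pos: "a > 0"
    and y0: "q * ((1/q) * (1 + (1 - 1/q) * coeff \<tau> 0 / s1)) < 0"
    and alpha: "exp (\<alpha> * complex_of_real (ln q))
                 = complex_of_real (q powi (-2) * (q * (1 - 1/q) * coeff \<tau> 1) / s1)"
  shows "\<exists>P :: nat \<Rightarrow> real poly. \<exists>d :: nat \<Rightarrow> complex.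
     \<forall>n. degree (P n) = n \<and> solves_qEHT q \<sigma>1 \<tau> n (poly (P n)) \<and> d n \<noteq> 0 \<and>
       (\<forall>m. (\<lambda>j. complex_of_real ((1/q - 1) * a * (1/q) ^ j
                  * poly (P n) ((1/q) ^ j * a) * poly (P m) ((1/q) ^ j * a))
               * (let x = (1/q) ^ j * a in
                    exp (\<alpha> * complex_of_real (ln \<bar>x\<bar>))
                    * complex_of_real (exp ((1/2) * (log q x - 1) * ln x))
                    * complex_of_real (qpoch_inf (q * a / x) q)))
            sums (if m = n then d n else 0))"
proof -
  define t0 where "t0 = coeff \<tau> 0"
  define t1 where "t1 = coeff \<tau> 1"
  have tau_eq: "\<tau> = [:t0, t1:]"
  proof (rule poly_eqI)
    fix n show "coeff \<tau> n = coeff [:t0, t1:] n"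
    proof (cases n)
      case (Suc k) then show ?thesis using tau(1)
        by (cases k) (auto simp: t0_def t1_def coeff_eq_0)
    qed (simp add: t0_def)
  qed
  have "coeff (smult q (\<sigma>1 + smult (1 - 1/q) ([:0, 1:] * \<tau>))) 1
      = coeff (smult (q * (1 - 1/q) * coeff \<tau> 1) ([:0, 1:] * [:- a, 1:])) 1"
    using sigma2_fact by simp
  hence R0: "q * (s1 + (1 - 1/q) * t0) = q * (1 - 1/q) * t1 * (- a)"
    unfolding sigma1(1) tau_eq by (simp add: t1_def)
  have R: "q * s1 + (q - 1) * t0 = - (q - 1) * t1 * a"
  proof -
    have "q * s1 + (q - 1) * t0 = q * (s1 + (1 - 1/q) * t0)" using q by (simp add: field_simps)
    moreover have "- (q - 1) * t1 * a = q * (1 - 1/q) * t1 * (- a)" using q by (simp add: field_simps)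
    ultimately show ?thesis using R0 by simp
  qed
  interpret Q: qset q a s1 t0 t1
    by unfold_locales (use q sigma1(2) tau(2) Lambda a_pos R in \<open>auto simp: t1_def\<close>)
  define K where "K = exp (\<alpha> * complex_of_real (ln a))"
  have K0: "K \<noteq> 0" by (simp add: K_def)
  define d where "d n = K * complex_of_real (suminf (\<lambda>j. Q.WW j * (poly (Q.PP n) (Q.xx j) * poly (Q.PP n) (Q.xx j))))" for n
  have PPnz: "Q.PP n \<noteq> 0" for n
  proof
    assume "Q.PP n = 0"
    hence "coeff (Q.PP n) n = 0" by simp
    thus False by (simp add: Q.coeff_PP Q.bb_nn)
  qed
  have expx: "exp (\<alpha> * complex_of_real (ln \<bar>(1/q)^j * a\<bar>)) = K * complex_of_real ((1/Q.cst)^j)" for j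
  proof -
    have "ln \<bar>(1/q)^j * a\<bar> = ln a - real j * ln q"
      using q a_pos by (simp add: ln_mult ln_realpow ln_div)
    hence h: "complex_of_real (ln \<bar>(1/q)^j * a\<bar>) = complex_of_real (ln a) - of_nat j * complex_of_real (ln q)"
      by simp
    have "\<alpha> * complex_of_real (ln \<bar>(1/q)^j * a\<bar>) = \<alpha> * complex_of_real (ln a) - of_nat j * (\<alpha> * complex_of_real (ln q))"
      unfolding h by (simp add: algebra_simps)
    hence "exp (\<alpha> * complex_of_real (ln \<bar>(1/q)^j * a\<bar>)) = K / exp (\<alpha> * complex_of_real (ln q)) ^ j"
      by (simp add: exp_diff exp_of_nat_mult K_def)
    also have "exp (\<alpha> * complex_of_real (ln q)) = complex_of_real Q.cst"
      using alpha unfolding Q.cst_def by (simp only: t1_def)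
    finally show ?thesis by (simp add: power_divide divide_inverse power_inverse)
  qed
  have termeq: "(\<lambda>j. complex_of_real ((1/q - 1) * a * (1/q) ^ j
                  * poly (Q.PP n) ((1/q) ^ j * a) * poly (Q.PP m) ((1/q) ^ j * a))
               * (let x = (1/q) ^ j * a in
                    exp (\<alpha> * complex_of_real (ln \<bar>x\<bar>))
                    * complex_of_real (exp ((1/2) * (log q x - 1) * ln x))
                    * complex_of_real (qpoch_inf (q * a / x) q)))
         = (\<lambda>j. K * complex_of_real (Q.WW j * (poly (Q.PP n) (Q.xx j) * poly (Q.PP m) (Q.xx j))))" for n m
  proof
    fix j
    show "complex_of_real ((1/q - 1) * a * (1/q) ^ j
                  * poly (Q.PP n) ((1/q) ^ j * a) * poly (Q.PP m) ((1/q) ^ j * a))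
               * (let x = (1/q) ^ j * a in
                    exp (\<alpha> * complex_of_real (ln \<bar>x\<bar>))
                    * complex_of_real (exp ((1/2) * (log q x - 1) * ln x))
                    * complex_of_real (qpoch_inf (q * a / x) q))
         = K * complex_of_real (Q.WW j * (poly (Q.PP n) (Q.xx j) * poly (Q.PP m) (Q.xx j)))"
      unfolding Let_def expx Q.WW_def Q.EE_def Q.xx_def by (simp add: mult_ac)
  qed
  have eig: "Q.Af (Q.xx j) * (poly (Q.PP n) (Q.xx (Suc j)) - poly (Q.PP n) (Q.xx j))
        + Q.Cf (Q.xx j) * (poly (Q.PP n) (q * Q.xx j) - poly (Q.PP n) (Q.xx j))
        + (- (Q.ee n * t1)) * poly (Q.PP n) (Q.xx j) = 0" for j n
  proof -
    have "Q.xx j \<noteq> 0" using Q.xx_pos[of j] by simp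
    from Q.PP_eig[OF this, of n] show ?thesis
      using q unfolding Q.xx_Suc by (simp add: divide_inverse mult.commute)
  qed
  show ?thesis
  proof (intro exI[of _ Q.PP] exI[of _ d] allI conjI)
    fix n
    show "degree (Q.PP n) = n" by (rule Q.degree_PP)
    show "solves_qEHT q \<sigma>1 \<tau> n (poly (Q.PP n))" unfolding sigma1(1) tau_eq by (rule Q.PP_solves)
    have pos: "suminf (\<lambda>j. Q.WW j * (poly (Q.PP n) (Q.xx j) * poly (Q.PP n) (Q.xx j))) > 0"
      by (rule Q.pos_norm(2)[OF PPnz])
    show "d n \<noteq> 0" unfolding d_def using K0 pos by simp
    fix m
    have "(\<lambda>j. K * complex_of_real (Q.WW j * (poly (Q.PP n) (Q.xx j) * poly (Q.PP m) (Q.xx j))))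
          sums (if m = n then d n else 0)"
    proof (cases "m = n")
      case True
      have "(\<lambda>j. complex_of_real (Q.WW j * (poly (Q.PP n) (Q.xx j) * poly (Q.PP n) (Q.xx j))))
          sums complex_of_real (suminf (\<lambda>j. Q.WW j * (poly (Q.PP n) (Q.xx j) * poly (Q.PP n) (Q.xx j))))"
        unfolding sums_of_real_iff by (rule Q.pos_norm(1)[OF PPnz])
      from sums_mult[OF this, of K] show ?thesis using True by (simp add: d_def)
    next
      case False
      have ne: "- (Q.ee n * t1) \<noteq> - (Q.ee m * t1)" using False Q.ee_inj[of n m] Q.t1nz by auto
      have "(\<lambda>j. Q.WW j * (poly (Q.PP n) (Q.xx j) * poly (Q.PP m) (Q.xx j))) sums 0"
        by (rule Q.ortho[OF eig[where n=n] eig[where n=m] ne])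
      hence "(\<lambda>j. complex_of_real (Q.WW j * (poly (Q.PP n) (Q.xx j) * poly (Q.PP m) (Q.xx j)))) sums complex_of_real 0"
        unfolding sums_of_real_iff .
      from sums_mult[OF this, of K] show ?thesis using False by simp
    qed
    thus "(\<lambda>j. complex_of_real ((1/q - 1) * a * (1/q) ^ j
                  * poly (Q.PP n) ((1/q) ^ j * a) * poly (Q.PP m) ((1/q) ^ j * a))
               * (let x = (1/q) ^ j * a in
                    exp (\<alpha> * complex_of_real (ln \<bar>x\<bar>))
                    * complex_of_real (exp ((1/2) * (log q x - 1) * ln x))
                    * complex_of_real (qpoch_inf (q * a / x) q)))
            sums (if m = n then d n else 0)" unfolding termeq .
  qed
qed

end
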